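(* Let $X$ be a nontrivial real Banach space. The following assertions are equivalent: (i) $X^*$ has the weak$^*$ local diameter $2$ property; (ii) $X$ is locally octahedral; (iii) for every $x\in S_X$, every $\alpha\in[-1,1]$, every $\varepsilon>0$, and every $\varepsilon_0\in(0,\varepsilon)$, there is a $y\in S_X$ such that, whenever $|\gamma|\leq 1+\varepsilon_0$, there is a $y^*\in X^*$ satisfying $y^*(x)=\alpha$, $y^*(y)=\gamma$, and $\|y^*\|\leq 1+\varepsilon$; (iii') for every $x\in S_X$, every $\alpha\in[-1,1]$, and every $\varepsilon>0$, there are $y\in S_X$ and $x_1^*,x_2^*\in X^*$ satisfying $x_1^*(x)=x_2^*(x)=\alpha$, $x_1^*(y)-x_2^*(y)>2-\varepsilon$, and $\|x_1^*\|,\|x_2^*\|\leq 1+\varepsilon$; (iii'') for every $x\in S_X$ and every $\varepsilon>0$, there are $y\in S_X$ and $x_1^*,x_2^*\in X^*$ satisfying $x_1^*(x)=x_2^*(x)=1$, $x_1^*(y)-x_2^*(y)>2-\varepsilon$, and $\|x_1^*\|,\|x_2^*\|\leq 1+\varepsilon$.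
   Context: $B_Z$, $S_Z$ denote the closed unit ball and unit sphere of a Banach space $Z$. A weak$^*$ slice of $B_{X^*}$ is a set of the form $\{x^*\in B_{X^*}: x^*(x)>1-\alpha\}$ with $x\in S_X$ and $\alpha>0$. $X^*$ has the weak$^*$ local diameter $2$ property if every weak$^*$ slice of $B_{X^*}$ has diameter $2$. $X$ is locally octahedral if for every $x\in X$ and every $\varepsilon>0$ there is a $y\in S_X$ such that $\|sx+y\|\geq(1-\varepsilon)(|s|\|x\|+\|y\|)$ for all $s\in\mathbb{R}$. *)

theory Defs
  imports "HOL-Analysis.Analysis"
begin

(* The dual space X* is modelled by bounded linear functionals of type blinfun to real, with the operator norm. *)

definition wstar_slice :: "'a::real_normed_vector \<Rightarrow> real \<Rightarrow> ('a \<Rightarrow>\<^sub>L real) set" where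
  "wstar_slice x \<alpha> = {f. norm f \<le> 1 \<and> blinfun_apply f x > 1 - \<alpha>}"

definition wstar_LD2P :: "'a::real_normed_vector itself \<Rightarrow> bool" where
  "wstar_LD2P _ \<longleftrightarrow>
     (\<forall>(x::'a) \<alpha>. norm x = 1 \<and> \<alpha> > 0 \<longrightarrow> diameter (wstar_slice x \<alpha>) = 2)"

definition locally_octahedral :: "'a::real_normed_vector itself \<Rightarrow> bool" where
  "locally_octahedral _ \<longleftrightarrow>
     (\<forall>(x::'a) (\<epsilon>::real). \<epsilon> > 0 \<longrightarrow>
        (\<exists>y::'a. norm y = 1 \<and>
           (\<forall>s::real. norm (s *\<^sub>R x + y) \<ge> (1 - \<epsilon>) * (\<bar>s\<bar> * norm x + norm y))))"

end

theory Submission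
  imports Defs
begin


definition lsub :: "('b::real_vector) set \<Rightarrow> bool" where
  "lsub S \<longleftrightarrow> 0 \<in> S \<and> (\<forall>x\<in>S. \<forall>y\<in>S. x + y \<in> S) \<and> (\<forall>r. \<forall>x\<in>S. r *\<^sub>R x \<in> S)"

lemma HB:
  fixes G0 :: "('a::real_normed_vector \<times> real) set"
  assumes G0: "lsub G0" "\<forall>a. (0,a)\<in>G0 \<longrightarrow> a=0" "\<forall>(x,a)\<in>G0. a \<le> C * norm x" and C: "C \<ge> 0"
  shows "\<exists>f::'a \<Rightarrow>\<^sub>L real. (\<forall>(x,a)\<in>G0. blinfun_apply f x = a) \<and> norm f \<le> C"
proof -
  define A where "A = {G. lsub G \<and> (\<forall>a. (0,a)\<in>G \<longrightarrow> a=0) \<and> G0 \<subseteq> G \<and> (\<forall>(x,a)\<in>G. a \<le> C*norm x)}"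
  have G0A: "G0 \<in> A" using G0 by (auto simp: A_def)
  have "\<forall>Ch\<in>chains A. \<exists>U\<in>A. \<forall>X\<in>Ch. X \<subseteq> U"
  proof
    fix Ch assume Ch: "Ch \<in> chains A"
    show "\<exists>U\<in>A. \<forall>X\<in>Ch. X \<subseteq> U"
    proof (cases "Ch = {}")
      case True then show ?thesis using G0A by auto
    next
      case False
      have sub: "Ch \<subseteq> A" and ch: "\<And>X Y. X \<in> Ch \<Longrightarrow> Y \<in> Ch \<Longrightarrow> X \<subseteq> Y \<or> Y \<subseteq> X"
        using Ch by (auto simp: chains_def chain_subset_def)
      have "lsub (\<Union>Ch)"
        unfolding lsub_def
      proof (intro conjI ballI allI)
        show "0 \<in> \<Union>Ch" using False sub by (auto simp: A_def lsub_def)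
      next
        fix x y assume "x \<in> \<Union>Ch" "y \<in> \<Union>Ch"
        then obtain X Y where XY: "X\<in>Ch" "Y\<in>Ch" "x\<in>X" "y\<in>Y" by auto
        show "x + y \<in> \<Union>Ch"
        proof (cases "X \<subseteq> Y")
          case True
          have "lsub Y" using XY sub by (auto simp: A_def)
          then have "x + y \<in> Y" using True XY unfolding lsub_def by blast
          then show ?thesis using XY by blast
        next
          case False then have "Y \<subseteq> X" using ch XY by blast
          have "lsub X" using XY sub by (auto simp: A_def)
          then have "x + y \<in> X" using \<open>Y \<subseteq> X\<close> XY unfolding lsub_def by blast
          then show ?thesis using XY by blast
        qed
      next
        fix r x assume "x \<in> \<Union>Ch"
        then obtain X where X: "X \<in> Ch" "x \<in> X" by auto
        have "lsub X" using X sub by (auto simp: A_def)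
        then have "r *\<^sub>R x \<in> X" using X unfolding lsub_def by blast
        then show "r *\<^sub>R x \<in> \<Union>Ch" using X by blast
      qed
      moreover have "\<Union>Ch \<in> A" using calculation False sub unfolding A_def by blast
      then show ?thesis by auto
    qed
  qed
  from Zorn_Lemma2[OF this] obtain M where MA: "M \<in> A" and Mmax: "\<And>X. X \<in> A \<Longrightarrow> M \<subseteq> X \<Longrightarrow> X = M"
    by blast
  have Ms: "lsub M" and M0: "\<And>a. (0,a)\<in>M \<Longrightarrow> a=0" and G0M: "G0 \<subseteq> M"
    and Mb: "\<And>x a. (x,a)\<in>M \<Longrightarrow> a \<le> C*norm x"
    using MA by (auto simp: A_def)
  have Madd: "\<And>p q. p \<in> M \<Longrightarrow> q \<in> M \<Longrightarrow> p + q \<in> M" and Msc: "\<And>r p. p \<in> M \<Longrightarrow> r *\<^sub>R p \<in> M"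
    and Mz: "(0,0) \<in> M"
    using Ms by (auto simp: lsub_def zero_prod_def)
  have dom: "\<exists>c. (x0,c) \<in> M" for x0
  proof (rule ccontr)
    assume nx: "\<nexists>c. (x0, c) \<in> M"
    define S where "S = {a - C*norm(m - x0) | m a. (m,a)\<in>M}"
    have key: "a - C*norm(m - x0) \<le> C*norm(n + x0) - b" if "(m,a)\<in>M" "(n,b)\<in>M" for m a n b
    proof -
      have "(m+n, a+b) \<in> M" using Madd[OF that] by simp
      then have "a + b \<le> C*norm(m+n)" by (rule Mb)
      also have "norm (m+n) \<le> norm (m - x0) + norm (n + x0)"
        using norm_triangle_ineq[of "m - x0" "n + x0"] by simp
      then have "C*norm(m+n) \<le> C*norm (m - x0) + C*norm (n + x0)"
        using C by (metis distrib_left mult_left_mono)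
      finally show ?thesis by linarith
    qed
    define c where "c = Sup S"
    have Sne: "S \<noteq> {}" using Mz by (auto simp: S_def)
    have Sbdd: "bdd_above S" unfolding bdd_above_def S_def using key[OF _ Mz] by auto
    have c1: "a - C*norm(m - x0) \<le> c" if "(m,a)\<in>M" for m a
      unfolding c_def using that Sbdd by (auto simp: S_def intro!: cSup_upper)
    have c2: "c \<le> C*norm(n + x0) - b" if "(n,b)\<in>M" for n b
      unfolding c_def using that Sne key by (auto simp: S_def intro!: cSup_least)
    define M' where "M' = {(m + t *\<^sub>R x0, a + t*c) | m a t. (m,a)\<in>M}"
    have bnd: "a + t*c \<le> C * norm (m + t *\<^sub>R x0)" if ma: "(m,a)\<in>M" for m a t
    proof -
      consider "t = 0" | "t > 0" | "t < 0" by linarith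
      then show ?thesis
      proof cases
        case 1 then show ?thesis using Mb[OF ma] by simp
      next
        case 2
        have "((1/t) *\<^sub>R m, (1/t)*a) \<in> M" using Msc[OF ma, of "1/t"] by simp
        from c2[OF this] have "c \<le> C * norm ((1/t) *\<^sub>R m + x0) - (1/t)*a" .
        moreover have "(1/t) *\<^sub>R m + x0 = (1/t) *\<^sub>R (m + t *\<^sub>R x0)" using 2 by (simp add: algebra_simps)
        ultimately have "c \<le> C * (norm (m + t *\<^sub>R x0) / t) - a/t" using 2 by simp
        then have "t*c \<le> t*(C * (norm (m + t *\<^sub>R x0) / t) - a/t)" using 2 by (simp add: mult_left_mono)
        also have "\<dots> = C * norm (m + t *\<^sub>R x0) - a" using 2 by (simp add: field_simps)
        finally show ?thesis by linarith
      next
        case 3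
        define s where "s = -t"
        have s: "s > 0" using 3 by (simp add: s_def)
        have "((1/s) *\<^sub>R m, (1/s)*a) \<in> M" using Msc[OF ma, of "1/s"] by simp
        from c1[OF this] have "(1/s)*a - C * norm ((1/s) *\<^sub>R m - x0) \<le> c" .
        moreover have "(1/s) *\<^sub>R m - x0 = (1/s) *\<^sub>R (m + t *\<^sub>R x0)" using s by (simp add: s_def algebra_simps)
        ultimately have "a/s - C * (norm (m + t *\<^sub>R x0) / s) \<le> c" using s by simp
        then have "s*(a/s - C * (norm (m + t *\<^sub>R x0) / s)) \<le> s*c" using s by (simp add: mult_left_mono)
        also have "s*(a/s - C * (norm (m + t *\<^sub>R x0) / s)) = a - C * norm (m + t *\<^sub>R x0)" using s by (simp add: field_simps)
        finally show ?thesis by (simp add: s_def)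
      qed
    qed
    have "lsub M'"
      unfolding lsub_def
    proof (intro conjI ballI allI)
      show "0 \<in> M'" unfolding M'_def using Mz by (auto simp: zero_prod_def intro!: exI[of _ 0] exI[of _ "0::real"])
    next
      fix p q assume "p \<in> M'" "q \<in> M'"
      then obtain m1 a1 t1 m2 a2 t2 where pq: "p = (m1 + t1 *\<^sub>R x0, a1 + t1*c)" "(m1,a1)\<in>M"
        "q = (m2 + t2 *\<^sub>R x0, a2 + t2*c)" "(m2,a2)\<in>M" unfolding M'_def by blast
      have "(m1+m2, a1+a2) \<in> M" using Madd[OF pq(2) pq(4)] by simp
      moreover have "p + q = ((m1+m2) + (t1+t2) *\<^sub>R x0, (a1+a2) + (t1+t2)*c)"
        using pq by (simp add: algebra_simps)
      ultimately show "p + q \<in> M'" unfolding M'_def by blast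
    next
      fix r p assume "p \<in> M'"
      then obtain m a t where pq: "p = (m + t *\<^sub>R x0, a + t*c)" "(m,a)\<in>M" unfolding M'_def by blast
      have "(r *\<^sub>R m, r*a) \<in> M" using Msc[OF pq(2), of r] by simp
      moreover have "r *\<^sub>R p = (r *\<^sub>R m + (r*t) *\<^sub>R x0, r*a + (r*t)*c)"
        using pq by (simp add: algebra_simps)
      ultimately show "r *\<^sub>R p \<in> M'" unfolding M'_def by blast
    qed
    moreover have "(\<forall>a. (0,a)\<in>M' \<longrightarrow> a=0)"
    proof (intro allI impI)
      fix b assume "(0,b) \<in> M'"
      then obtain m a t where mt: "0 = m + t *\<^sub>R x0" "b = a + t*c" "(m,a)\<in>M" unfolding M'_def by blast
      show "b = 0"
      proof (cases "t = 0")
        case True then show ?thesis using mt M0 by auto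
      next
        case False
        have "((-1/t) *\<^sub>R m, (-1/t)*a) \<in> M" using Msc[OF mt(3), of "-1/t"] by simp
        moreover have "(-1/t) *\<^sub>R m = x0"
        proof -
          have "m = - (t *\<^sub>R x0)" using mt(1) by (simp add: eq_neg_iff_add_eq_0)
          then show ?thesis using False by simp
        qed
        ultimately show ?thesis using nx by auto
      qed
    qed
    moreover have MM': "M \<subseteq> M'"
    proof
      fix p assume "p \<in> M" then obtain m a where "p = (m,a)" "(m,a)\<in>M" by (cases p) auto
      moreover have "(m + (0::real) *\<^sub>R x0, a + 0*c) \<in> M'" unfolding M'_def using \<open>(m,a)\<in>M\<close> by blast
      ultimately show "p \<in> M'" by simp
    qed
    moreover have "\<forall>(x,a)\<in>M'. a \<le> C*norm x" unfolding M'_def using bnd by auto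
    ultimately have "M' \<in> A" using G0M unfolding A_def by auto
    from Mmax[OF this MM'] have "M' = M" .
    moreover have "(0 + (1::real) *\<^sub>R x0, 0 + 1*c) \<in> M'" unfolding M'_def using Mz by blast
    then have "(x0, c) \<in> M'" by simp
    ultimately show False using nx by auto
  qed
  have uniq: "a = b" if "(x,a)\<in>M" "(x,b)\<in>M" for x a b
  proof -
    have "(x,a) + (-1) *\<^sub>R (x,b) \<in> M" using Madd[OF that(1) Msc[OF that(2)]] .
    then have "(0, a - b) \<in> M" by simp
    then show ?thesis using M0 by fastforce
  qed
  define f where "f x = (THE a. (x,a)\<in>M)" for x
  have fM: "(x, f x) \<in> M" for x
    unfolding f_def using dom[of x] uniq by (metis theI)
  have fadd: "f (x + y) = f x + f y" for x y
    using Madd[OF fM[of x] fM[of y]] fM[of "x+y"] uniq by simp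
  have fsc: "f (r *\<^sub>R x) = r *\<^sub>R f x" for r x
    using Msc[OF fM[of x], of r] fM[of "r *\<^sub>R x"] uniq by simp
  have fb: "norm (f x) \<le> norm x * C" for x
  proof -
    have "f x \<le> C * norm x" using Mb[OF fM] .
    moreover have "(-x, - f x) \<in> M" using Msc[OF fM[of x], of "-1"] by simp
    then have "- f x \<le> C * norm x" using Mb by fastforce
    ultimately show ?thesis by (simp add: abs_le_iff mult.commute)
  qed
  have bl: "bounded_linear f" by (rule bounded_linear_intro[OF fadd fsc fb])
  show ?thesis
  proof (intro exI[of _ "Blinfun f"] conjI)
    show "\<forall>(x,a)\<in>G0. blinfun_apply (Blinfun f) x = a"
    proof (clarify)
      fix x a assume "(x,a) \<in> G0"
      then have "(x,a) \<in> M" using G0M by blast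
      then show "blinfun_apply (Blinfun f) x = a" using fM[of x] uniq bounded_linear_Blinfun_apply[OF bl] by metis
    qed
    show "norm (Blinfun f) \<le> C"
      using C fb by (intro norm_blinfun_bound) (auto simp: bounded_linear_Blinfun_apply[OF bl] mult.commute)
  qed
qed



lemma ext2:
  fixes u y :: "'a::real_normed_vector"
  assumes oc: "\<And>a b. c*(\<bar>a\<bar>+\<bar>b\<bar>) \<le> norm (a *\<^sub>R u + b *\<^sub>R y)" and c: "c > 0"
    and K: "\<bar>\<alpha>\<bar> \<le> K" "\<bar>\<gamma>\<bar> \<le> K"
  shows "\<exists>f::'a \<Rightarrow>\<^sub>L real. blinfun_apply f u = \<alpha> \<and> blinfun_apply f y = \<gamma> \<and> norm f \<le> K / c"
proof -
  define G0 where "G0 = {(s *\<^sub>R u + t *\<^sub>R y, s*\<alpha> + t*\<gamma>) | s t. True}"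
  have K0: "K \<ge> 0" using K by linarith
  have "lsub G0" unfolding lsub_def
  proof (intro conjI ballI allI)
    have "(0 *\<^sub>R u + 0 *\<^sub>R y, 0*\<alpha> + 0*\<gamma>) \<in> G0" unfolding G0_def by blast
    then show "0 \<in> G0" by (simp add: zero_prod_def)
  next
    fix p q assume "p \<in> G0" "q \<in> G0"
    then obtain v1 t1 v2 t2 where "p = (v1 *\<^sub>R u + t1 *\<^sub>R y, v1*\<alpha> + t1*\<gamma>)" "q = (v2 *\<^sub>R u + t2 *\<^sub>R y, v2*\<alpha> + t2*\<gamma>)"
      unfolding G0_def by blast
    then have "p + q = ((v1+v2) *\<^sub>R u + (t1+t2) *\<^sub>R y, (v1+v2)*\<alpha> + (t1+t2)*\<gamma>)" by (simp add: algebra_simps)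
    then show "p + q \<in> G0" unfolding G0_def by blast
  next
    fix r p assume "p \<in> G0"
    then obtain v1 t1 where "p = (v1 *\<^sub>R u + t1 *\<^sub>R y, v1*\<alpha> + t1*\<gamma>)" unfolding G0_def by blast
    then have "r *\<^sub>R p = ((r * v1) *\<^sub>R u + (r * t1) *\<^sub>R y, (r * v1)*\<alpha> + (r * t1)*\<gamma>)" by (simp add: algebra_simps)
    then show "r *\<^sub>R p \<in> G0" unfolding G0_def by blast
  qed
  moreover have "\<forall>a. (0,a)\<in>G0 \<longrightarrow> a=0"
  proof (intro allI impI)
    fix a assume "(0,a) \<in> G0"
    then obtain s t where st: "0 = s *\<^sub>R u + t *\<^sub>R y" "a = s*\<alpha> + t*\<gamma>" unfolding G0_def by blast
    have "c*(\<bar>s\<bar>+\<bar>t\<bar>) \<le> 0" using oc[of s t] st(1) by simp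
    then have "\<bar>s\<bar>+\<bar>t\<bar> \<le> 0" using c by (simp add: mult_le_0_iff)
    then have "s = 0" "t = 0" by (smt (verit) abs_ge_zero abs_eq_0)+
    then show "a = 0" using st(2) by simp
  qed
  moreover have "\<forall>(x,a)\<in>G0. a \<le> (K/c) * norm x"
  proof (clarify)
    fix x a assume "(x,a) \<in> G0"
    then obtain s t where st: "x = s *\<^sub>R u + t *\<^sub>R y" "a = s*\<alpha> + t*\<gamma>" unfolding G0_def by blast
    have "a \<le> \<bar>s\<bar>*\<bar>\<alpha>\<bar> + \<bar>t\<bar>*\<bar>\<gamma>\<bar>" using st(2)
      by (metis abs_ge_self abs_mult abs_triangle_ineq order_trans)
    also have "\<dots> \<le> \<bar>s\<bar>*K + \<bar>t\<bar>*K" using K by (intro add_mono mult_left_mono) auto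
    also have "\<dots> = (K/c) * (c*(\<bar>s\<bar>+\<bar>t\<bar>))" using c by (simp add: field_simps)
    also have "\<dots> \<le> (K/c) * norm x" using oc[of s t] st(1) K0 c by (intro mult_left_mono) auto
    finally show "a \<le> (K/c) * norm x" .
  qed
  moreover have "K/c \<ge> 0" using K0 c by simp
  ultimately obtain f :: "'a \<Rightarrow>\<^sub>L real" where f: "\<forall>(x,a)\<in>G0. blinfun_apply f x = a" "norm f \<le> K/c"
    using HB[of G0 "K/c"] by blast
  have "(1 *\<^sub>R u + 0 *\<^sub>R y, 1*\<alpha> + 0*\<gamma>) \<in> G0" "(0 *\<^sub>R u + 1 *\<^sub>R y, 0*\<alpha> + 1*\<gamma>) \<in> G0" unfolding G0_def by blast+
  then show ?thesis using f by fastforce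
qed

lemma oct2:
  fixes u y :: "'a::real_normed_vector"
  assumes u: "norm u = 1" and y: "norm y = 1" and d: "0 \<le> \<delta>" "\<delta> \<le> 1"
    and h: "\<And>s. norm (s *\<^sub>R u + y) \<ge> (1 - \<delta>) * (\<bar>s\<bar> * norm u + norm y)"
  shows "(1-\<delta>)*(\<bar>a\<bar>+\<bar>b\<bar>) \<le> norm (a *\<^sub>R u + b *\<^sub>R y)"
proof (cases "b = 0")
  case True
  then show ?thesis using u d by (simp add: mult_left_le_one_le)
next
  case False
  have "a *\<^sub>R u + b *\<^sub>R y = b *\<^sub>R ((a/b) *\<^sub>R u + y)" using False by (simp add: algebra_simps)
  then have "norm (a *\<^sub>R u + b *\<^sub>R y) = \<bar>b\<bar> * norm ((a/b) *\<^sub>R u + y)" by simp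
  moreover have "\<bar>b\<bar> * ((1-\<delta>) * (\<bar>a/b\<bar> + 1)) \<le> \<bar>b\<bar> * norm ((a/b) *\<^sub>R u + y)" using h[of "a/b"] u y by (intro mult_left_mono) auto
  moreover have "\<bar>b\<bar> * ((1-\<delta>) * (\<bar>a/b\<bar> + 1)) = (1-\<delta>)*(\<bar>a\<bar>+\<bar>b\<bar>)" using False
    by (simp add: abs_divide field_simps)
  ultimately show ?thesis by linarith
qed

lemma LO_unit:
  fixes u :: "'a::real_normed_vector"
  assumes LO: "locally_octahedral TYPE('a)" and u: "norm u = 1" and d: "0 < \<delta>" "\<delta> \<le> 1"
  shows "\<exists>y::'a. norm y = 1 \<and> (\<forall>a b. (1-\<delta>)*(\<bar>a\<bar>+\<bar>b\<bar>) \<le> norm (a *\<^sub>R u + b *\<^sub>R y))"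
proof -
  obtain y :: 'a where y: "norm y = 1" "\<And>s. norm (s *\<^sub>R u + y) \<ge> (1 - \<delta>) * (\<bar>s\<bar> * norm u + norm y)"
    using LO d unfolding locally_octahedral_def by blast
  then show ?thesis using oct2[OF u y(1), of \<delta>] d by auto
qed

lemma normf_gt:
  fixes f :: "'a::real_normed_vector \<Rightarrow>\<^sub>L real"
  assumes "norm f > c" "c \<ge> 0"
  shows "\<exists>y. norm y = 1 \<and> blinfun_apply f y > c"
proof (rule ccontr)
  assume "\<not> ?thesis"
  then have h: "norm y = 1 \<Longrightarrow> blinfun_apply f y \<le> c" for y by force
  have "norm (blinfun_apply f x) \<le> c * norm x" for x
  proof (cases "x = 0")
    case True then show ?thesis by simp
  next
    case False
    define y where "y = (1/norm x) *\<^sub>R x"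
    have ny: "norm y = 1" "norm (-y) = 1" using False by (auto simp: y_def)
    have "blinfun_apply f y \<le> c" "blinfun_apply f (-y) \<le> c" using h ny by auto
    then have "\<bar>blinfun_apply f y\<bar> \<le> c" by (simp add: blinfun.minus_right)
    moreover have "x = norm x *\<^sub>R y" using False by (simp add: y_def)
    then have "blinfun_apply f x = norm x * blinfun_apply f y" by (metis blinfun.scaleR_right real_scaleR_def)
    ultimately show ?thesis using mult_left_mono[of "\<bar>blinfun_apply f y\<bar>" c "norm x"] by (simp add: abs_mult mult.commute)
  qed
  then have "norm f \<le> c" using assms(2) by (intro norm_blinfun_bound) auto
  then show False using assms by simp
qed



lemma LO_intro:
  assumes nontriv: "\<exists>z::'a::real_normed_vector. z \<noteq> 0"
    and H: "\<And>u::'a. \<And>\<epsilon>. norm u = 1 \<Longrightarrow> 0 < \<epsilon> \<Longrightarrow> \<epsilon> < 1 \<Longrightarrow>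
        \<exists>y::'a. norm y = 1 \<and> (\<forall>r. (1-\<epsilon>)*(\<bar>r\<bar>+1) \<le> norm (r *\<^sub>R u + y))"
  shows "locally_octahedral TYPE('a)"
  unfolding locally_octahedral_def
proof (intro allI impI)
  fix x :: 'a and \<epsilon> :: real assume e: "\<epsilon> > 0"
  obtain z :: 'a where z: "z \<noteq> 0" using nontriv by blast
  define y0 where "y0 = (1/norm z) *\<^sub>R z"
  have y0: "norm y0 = 1" using z by (simp add: y0_def)
  show "\<exists>y::'a. norm y = 1 \<and> (\<forall>s::real. norm (s *\<^sub>R x + y) \<ge> (1 - \<epsilon>) * (\<bar>s\<bar> * norm x + norm y))"
  proof (cases "\<epsilon> \<ge> 1")
    case True
    have "(1 - \<epsilon>) * (\<bar>s\<bar> * norm x + norm y0) \<le> 0" for s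
      using True y0 by (intro mult_nonpos_nonneg) auto
    then show ?thesis using y0 by (meson norm_ge_zero order_trans)
  next
    case False
    show ?thesis
    proof (cases "x = 0")
      case True then show ?thesis using y0 e by (intro exI[of _ y0]) auto
    next
      case xnz: False
      define u where "u = (1/norm x) *\<^sub>R x"
      have u: "norm u = 1" using xnz by (simp add: u_def)
      obtain y :: 'a where y: "norm y = 1" "\<And>r. (1-\<epsilon>)*(\<bar>r\<bar>+1) \<le> norm (r *\<^sub>R u + y)"
        using H[OF u e] False by force
      have "norm (s *\<^sub>R x + y) \<ge> (1 - \<epsilon>) * (\<bar>s\<bar> * norm x + norm y)" for s
      proof -
        have "s *\<^sub>R x = (s * norm x) *\<^sub>R u" using xnz by (simp add: u_def)
        then show ?thesis using y(2)[of "s * norm x"] y(1) by (simp add: abs_mult)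
      qed
      then show ?thesis using y(1) by blast
    qed
  qed
qed

lemma L1:
  fixes dummy :: "'a::real_normed_vector itself"
  assumes LO: "locally_octahedral TYPE('a)"
  shows "\<forall>(x::'a) (\<alpha>::real) (\<epsilon>::real) (\<epsilon>0::real).
           norm x = 1 \<and> \<alpha> \<in> {-1..1} \<and> \<epsilon> > 0 \<and> \<epsilon>0 \<in> {0<..<\<epsilon>} \<longrightarrow>
           (\<exists>y::'a. norm y = 1 \<and>
              (\<forall>\<gamma>::real. \<bar>\<gamma>\<bar> \<le> 1 + \<epsilon>0 \<longrightarrow>
                 (\<exists>g::'a \<Rightarrow>\<^sub>L real. blinfun_apply g x = \<alpha> \<and> blinfun_apply g y = \<gamma> \<and> norm g \<le> 1 + \<epsilon>)))"
proof (intro allI impI)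
  fix x :: 'a and \<alpha> \<epsilon> \<epsilon>0 :: real
  assume H: "norm x = 1 \<and> \<alpha> \<in> {-1..1} \<and> \<epsilon> > 0 \<and> \<epsilon>0 \<in> {0<..<\<epsilon>}"
  define \<delta> where "\<delta> = 1 - (1+\<epsilon>0)/(1+\<epsilon>)"
  have q: "(1+\<epsilon>0)/(1+\<epsilon>) < 1" "(1+\<epsilon>0)/(1+\<epsilon>) > 0" using H by (auto simp: field_simps)
  have d: "0 < \<delta>" "\<delta> \<le> 1" using q by (auto simp: \<delta>_def)
  obtain y :: 'a where y: "norm y = 1" "\<And>a b. (1-\<delta>)*(\<bar>a\<bar>+\<bar>b\<bar>) \<le> norm (a *\<^sub>R x + b *\<^sub>R y)"
    using LO_unit[OF LO _ d] H by blast
  have "\<exists>g::'a \<Rightarrow>\<^sub>L real. blinfun_apply g x = \<alpha> \<and> blinfun_apply g y = \<gamma> \<and> norm g \<le> 1 + \<epsilon>"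
    if g: "\<bar>\<gamma>\<bar> \<le> 1 + \<epsilon>0" for \<gamma>
  proof -
    have c: "1 - \<delta> > 0" using q by (simp add: \<delta>_def)
    have K: "\<bar>\<alpha>\<bar> \<le> 1 + \<epsilon>0" using H by auto
    have "(1+\<epsilon>0)/(1-\<delta>) = 1+\<epsilon>" using H by (simp add: \<delta>_def)
    then show ?thesis using ext2[OF y(2) c K g] by simp
  qed
  then show "\<exists>y::'a. norm y = 1 \<and> (\<forall>\<gamma>::real. \<bar>\<gamma>\<bar> \<le> 1 + \<epsilon>0 \<longrightarrow>
                 (\<exists>g::'a \<Rightarrow>\<^sub>L real. blinfun_apply g x = \<alpha> \<and> blinfun_apply g y = \<gamma> \<and> norm g \<le> 1 + \<epsilon>))"
    using y(1) by blast
qed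

lemma C_core:
  fixes u y :: "'a::real_normed_vector" and f1 f2 :: "'a \<Rightarrow>\<^sub>L real"
  assumes y: "norm y = 1" and f: "blinfun_apply f1 u = 1" "blinfun_apply f2 u = 1"
    "blinfun_apply f1 y - blinfun_apply f2 y > 2 - \<epsilon>/4" "norm f1 \<le> 1 + \<epsilon>/4" "norm f2 \<le> 1 + \<epsilon>/4"
    and e: "0 < \<epsilon>" "\<epsilon> < 1"
  shows "(1-\<epsilon>)*(\<bar>r\<bar>+1) \<le> norm (r *\<^sub>R u + y)"
proof -
  define \<delta> where "\<delta> = \<epsilon>/4"
  define N where "N = norm (r *\<^sub>R u + y)"
  have N0: "N \<ge> 0" by (simp add: N_def)
  have b1: "\<bar>blinfun_apply f1 z\<bar> \<le> (1+\<delta>) * norm z" for z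
    using norm_blinfun[of f1 z] f(4) by (simp add: \<delta>_def) (meson mult_right_mono norm_ge_zero order_trans)
  have b2: "\<bar>blinfun_apply f2 z\<bar> \<le> (1+\<delta>) * norm z" for z
    using norm_blinfun[of f2 z] f(5) by (simp add: \<delta>_def) (meson mult_right_mono norm_ge_zero order_trans)
  have y1: "\<bar>blinfun_apply f1 y\<bar> \<le> 1+\<delta>" "\<bar>blinfun_apply f2 y\<bar> \<le> 1+\<delta>" using b1[of y] b2[of y] y by auto
  have ap1: "blinfun_apply f1 (r *\<^sub>R u + y) = r + blinfun_apply f1 y"
    using f(1) by (simp add: blinfun.add_right blinfun.scaleR_right)
  have ap2: "blinfun_apply f2 (r *\<^sub>R u + y) = r + blinfun_apply f2 y"
    using f(2) by (simp add: blinfun.add_right blinfun.scaleR_right)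
  have key: "(1-\<epsilon>)*(1+\<delta>) \<le> 1 - 2*\<delta>" using e by (simp add: \<delta>_def algebra_simps power2_eq_square)
  have dpos: "1 + \<delta> > 0" "\<delta> \<ge> 0" using e by (auto simp: \<delta>_def)
  show ?thesis
  proof (cases "r \<ge> 0")
    case True
    have "(1+\<delta>) * N \<ge> r + 1 - 2*\<delta>"
      using b1[of "r *\<^sub>R u + y"] ap1 f(3) y1 unfolding N_def \<delta>_def by linarith
    moreover have "(1+\<delta>)*((1-\<epsilon>)*(\<bar>r\<bar>+1)) \<le> (1 - 2*\<delta>) * (r+1)"
      using key True by (simp add: mult.assoc[symmetric] mult.commute[of "1+\<delta>"] mult_right_mono)
    moreover have "(1 - 2*\<delta>) * (r+1) \<le> r + 1 - 2*\<delta>" using True dpos by (simp add: algebra_simps)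
    ultimately have "(1+\<delta>)*((1-\<epsilon>)*(\<bar>r\<bar>+1)) \<le> (1+\<delta>) * N" by linarith
    then show ?thesis using dpos unfolding N_def by (simp add: mult_le_cancel_left_pos)
  next
    case False
    have "(1+\<delta>) * N \<ge> -r + 1 - 2*\<delta>"
      using b2[of "r *\<^sub>R u + y"] ap2 f(3) y1 unfolding N_def \<delta>_def by linarith
    moreover have "(1+\<delta>)*((1-\<epsilon>)*(\<bar>r\<bar>+1)) \<le> (1 - 2*\<delta>) * (-r+1)"
      using key False by (simp add: mult.assoc[symmetric] mult.commute[of "1+\<delta>"] mult_right_mono)
    moreover have "(1 - 2*\<delta>) * (-r+1) \<le> -r + 1 - 2*\<delta>" using False dpos mult_nonneg_nonpos[of \<delta> r] by (simp add: algebra_simps)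
    ultimately have "(1+\<delta>)*((1-\<epsilon>)*(\<bar>r\<bar>+1)) \<le> (1+\<delta>) * N" by linarith
    then show ?thesis using dpos unfolding N_def by (simp add: mult_le_cancel_left_pos)
  qed
qed

lemma D_core:
  fixes u y :: "'a::real_normed_vector" and f1 f2 :: "'a \<Rightarrow>\<^sub>L real"
  assumes y: "norm y = 1" and f: "blinfun_apply f1 u > 1 - \<epsilon>" "blinfun_apply f2 u > 1 - \<epsilon>"
    "blinfun_apply f1 y - blinfun_apply f2 y > 2 - \<epsilon>" "norm f1 \<le> 1" "norm f2 \<le> 1"
  shows "(1-\<epsilon>)*(\<bar>r\<bar>+1) \<le> norm (r *\<^sub>R u + y)"
proof -
  define N where "N = norm (r *\<^sub>R u + y)"
  have b1: "\<bar>blinfun_apply f1 z\<bar> \<le> norm z" for z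
    using norm_blinfun[of f1 z] f(4) by (simp) (meson mult_left_le_one_le norm_ge_zero order_trans)
  have b2: "\<bar>blinfun_apply f2 z\<bar> \<le> norm z" for z
    using norm_blinfun[of f2 z] f(5) by (simp) (meson mult_left_le_one_le norm_ge_zero order_trans)
  have y1: "\<bar>blinfun_apply f1 y\<bar> \<le> 1" "\<bar>blinfun_apply f2 y\<bar> \<le> 1" using b1[of y] b2[of y] y by auto
  have ap1: "blinfun_apply f1 (r *\<^sub>R u + y) = r * blinfun_apply f1 u + blinfun_apply f1 y"
    by (simp add: blinfun.add_right blinfun.scaleR_right)
  have ap2: "blinfun_apply f2 (r *\<^sub>R u + y) = r * blinfun_apply f2 u + blinfun_apply f2 y"
    by (simp add: blinfun.add_right blinfun.scaleR_right)
  show ?thesis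
  proof (cases "r \<ge> 0")
    case True
    have "r * blinfun_apply f1 u \<ge> r * (1-\<epsilon>)" using True f(1) by (simp add: mult_left_mono)
    then show ?thesis using b1[of "r *\<^sub>R u + y"] ap1 f(3) y1 True by (simp add: algebra_simps)
  next
    case False
    have "r * blinfun_apply f2 u \<le> r * (1-\<epsilon>)" using False f(2) by (simp add: mult_left_mono_neg)
    then show ?thesis using b2[of "r *\<^sub>R u + y"] ap2 f(3) y1 False by (simp add: algebra_simps)
  qed
qed



lemma slice_bounded: "bounded (wstar_slice (u::'a::real_normed_vector) a)"
  unfolding bounded_iff wstar_slice_def by auto

lemma L5:
  assumes nontriv: "\<exists>z::'a::real_normed_vector. z \<noteq> 0" and D: "wstar_LD2P TYPE('a)"
  shows "locally_octahedral TYPE('a)"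
proof (rule LO_intro[OF nontriv])
  fix u :: 'a and \<epsilon> :: real assume u: "norm u = 1" and e: "0 < \<epsilon>" "\<epsilon> < 1"
  define S where "S = wstar_slice u \<epsilon>"
  have "diameter S = 2" using D u e unfolding wstar_LD2P_def S_def by blast
  then obtain f1 f2 where f: "f1 \<in> S" "f2 \<in> S" "dist f1 f2 > 2 - \<epsilon>"
  proof -
    have "0 < 2 - \<epsilon>" "2 - \<epsilon> < diameter S" using e \<open>diameter S = 2\<close> by auto
    then show ?thesis using diameter_bounded(2)[OF slice_bounded[of u \<epsilon>]] that unfolding S_def by blast
  qed
  have "norm (f1 - f2) > 2 - \<epsilon>" using f(3) by (simp add: dist_norm)
  then obtain y where y: "norm y = 1" "blinfun_apply (f1 - f2) y > 2 - \<epsilon>"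
    using normf_gt[of "2-\<epsilon>" "f1 - f2"] e by auto
  have "blinfun_apply f1 y - blinfun_apply f2 y > 2 - \<epsilon>" using y(2) by (simp add: blinfun.diff_left)
  moreover have "blinfun_apply f1 u > 1 - \<epsilon>" "blinfun_apply f2 u > 1 - \<epsilon>" "norm f1 \<le> 1" "norm f2 \<le> 1"
    using f(1,2) by (auto simp: S_def wstar_slice_def)
  ultimately show "\<exists>y::'a. norm y = 1 \<and> (\<forall>r. (1-\<epsilon>)*(\<bar>r\<bar>+1) \<le> norm (r *\<^sub>R u + y))"
    using D_core y(1) by blast
qed

lemma L6:
  assumes LO: "locally_octahedral TYPE('a::real_normed_vector)"
  shows "wstar_LD2P TYPE('a)"
  unfolding wstar_LD2P_def
proof (intro allI impI)
  fix u :: 'a and \<alpha> :: real assume H: "norm u = 1 \<and> \<alpha> > 0"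
  define S where "S = wstar_slice u \<alpha>"
  have bS: "bounded S" unfolding S_def by (rule slice_bounded)
  have le: "diameter S \<le> 2"
  proof (rule diameter_le)
    fix f g assume "f \<in> S" "g \<in> S"
    then have "norm f \<le> 1" "norm g \<le> 1" by (auto simp: S_def wstar_slice_def)
    then show "norm (f - g) \<le> 2" using norm_triangle_ineq4[of f g] by linarith
  qed simp
  have ge: "\<not> diameter S < 2"
  proof
    assume dl: "diameter S < 2"
    define d where "d = diameter S"
    define \<delta> where "\<delta> = min (1/2) (min (\<alpha>/2) ((2-d)/4))"
    have dl4: "\<delta> \<le> (2-d)/4" unfolding \<delta>_def by (intro min.coboundedI2) simp
    have d2: "d < 2" using dl by (simp add: d_def)
    have dd4: "2*(1-\<delta>) > d" using dl4 d2 by argo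
    have dd1: "0 < \<delta>" "\<delta> \<le> 1" "\<delta> < \<alpha>" using H d2 by (auto simp: \<delta>_def)
    have dh: "\<delta> \<le> 1/2" unfolding \<delta>_def by (intro min.coboundedI1) simp
    note dd = dd1 dd4 dh
    obtain y :: 'a where y: "norm y = 1" "\<And>a b. (1-\<delta>)*(\<bar>a\<bar>+\<bar>b\<bar>) \<le> norm (a *\<^sub>R u + b *\<^sub>R y)"
      using LO_unit[OF LO _ dd(1,2)] H by blast
    have c: "1 - \<delta> > 0" using dd by simp
    have K: "\<bar>1-\<delta>\<bar> \<le> 1-\<delta>" "\<bar>-(1-\<delta>)\<bar> \<le> 1-\<delta>" using c by auto
    obtain fp :: "'a \<Rightarrow>\<^sub>L real" where fp: "blinfun_apply fp u = 1-\<delta>" "blinfun_apply fp y = 1-\<delta>" "norm fp \<le> (1-\<delta>)/(1-\<delta>)"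
      using ext2[OF y(2) c K(1) K(1)] by blast
    obtain fm :: "'a \<Rightarrow>\<^sub>L real" where fm: "blinfun_apply fm u = 1-\<delta>" "blinfun_apply fm y = -(1-\<delta>)" "norm fm \<le> (1-\<delta>)/(1-\<delta>)"
      using ext2[OF y(2) c K(1) K(2)] by blast
    have inS: "fp \<in> S" "fm \<in> S" using fp fm c dd by (auto simp: S_def wstar_slice_def)
    have "2*(1-\<delta>) = \<bar>blinfun_apply (fp - fm) y\<bar>" using fp fm c by (simp add: blinfun.diff_left)
    also have "\<dots> \<le> norm (fp - fm)" using norm_blinfun[of "fp - fm" y] y(1) by simp
    also have "\<dots> = dist fp fm" by (simp add: dist_norm)
    also have "\<dots> \<le> d" unfolding d_def by (rule diameter_bounded_bound[OF bS inS])
    finally show False using dd by simp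
  qed
  from le ge show "diameter (wstar_slice u \<alpha>) = 2" unfolding S_def by simp
qed



theorem theorem3p1:
  assumes nontriv: "\<exists>z::'a::banach. z \<noteq> 0"
  shows "(wstar_LD2P TYPE('a) \<longleftrightarrow> locally_octahedral TYPE('a))
    \<and> (locally_octahedral TYPE('a) \<longleftrightarrow>
        (\<forall>(x::'a) (\<alpha>::real) (\<epsilon>::real) (\<epsilon>0::real).
           norm x = 1 \<and> \<alpha> \<in> {-1..1} \<and> \<epsilon> > 0 \<and> \<epsilon>0 \<in> {0<..<\<epsilon>} \<longrightarrow>
           (\<exists>y::'a. norm y = 1 \<and>
              (\<forall>\<gamma>::real. \<bar>\<gamma>\<bar> \<le> 1 + \<epsilon>0 \<longrightarrow>
                 (\<exists>g::'a \<Rightarrow>\<^sub>L real. blinfun_apply g x = \<alpha> \<and> blinfun_apply g y = \<gamma> \<and> norm g \<le> 1 + \<epsilon>)))))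
    \<and> (locally_octahedral TYPE('a) \<longleftrightarrow>
        (\<forall>(x::'a) (\<alpha>::real) (\<epsilon>::real).
           norm x = 1 \<and> \<alpha> \<in> {-1..1} \<and> \<epsilon> > 0 \<longrightarrow>
           (\<exists>(y::'a) (f1::'a \<Rightarrow>\<^sub>L real) (f2::'a \<Rightarrow>\<^sub>L real). norm y = 1 \<and>
              blinfun_apply f1 x = \<alpha> \<and> blinfun_apply f2 x = \<alpha> \<and> blinfun_apply f1 y - blinfun_apply f2 y > 2 - \<epsilon> \<and>
              norm f1 \<le> 1 + \<epsilon> \<and> norm f2 \<le> 1 + \<epsilon>)))
    \<and> (locally_octahedral TYPE('a) \<longleftrightarrow>
        (\<forall>(x::'a) (\<epsilon>::real).
           norm x = 1 \<and> \<epsilon> > 0 \<longrightarrow>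
           (\<exists>(y::'a) (f1::'a \<Rightarrow>\<^sub>L real) (f2::'a \<Rightarrow>\<^sub>L real). norm y = 1 \<and>
              blinfun_apply f1 x = 1 \<and> blinfun_apply f2 x = 1 \<and> blinfun_apply f1 y - blinfun_apply f2 y > 2 - \<epsilon> \<and>
              norm f1 \<le> 1 + \<epsilon> \<and> norm f2 \<le> 1 + \<epsilon>)))"
  (is "(?D \<longleftrightarrow> ?LO) \<and> (?LO \<longleftrightarrow> ?A) \<and> (?LO \<longleftrightarrow> ?B) \<and> (?LO \<longleftrightarrow> ?C)")
proof -
  have LA: "?LO \<Longrightarrow> ?A" using L1 by blast
  have AB: "?A \<Longrightarrow> ?B"
  proof (intro allI impI)
    fix x :: 'a and \<alpha> \<epsilon> :: real assume A: ?A and H: "norm x = 1 \<and> \<alpha> \<in> {-1..1} \<and> \<epsilon> > 0"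
    then obtain y :: 'a where y: "norm y = 1" "\<And>\<gamma>. \<bar>\<gamma>\<bar> \<le> 1 + \<epsilon>/2 \<Longrightarrow>
       (\<exists>g::'a \<Rightarrow>\<^sub>L real. blinfun_apply g x = \<alpha> \<and> blinfun_apply g y = \<gamma> \<and> norm g \<le> 1 + \<epsilon>)"
    proof -
      have "norm x = 1 \<and> \<alpha> \<in> {-1..1} \<and> \<epsilon> > 0 \<and> \<epsilon>/2 \<in> {0<..<\<epsilon>}" using H by auto
      from A[rule_format, OF this] show ?thesis using that by blast
    qed
    obtain f1 where f1: "blinfun_apply f1 x = \<alpha>" "blinfun_apply f1 y = 1" "norm f1 \<le> 1 + \<epsilon>"
      using y(2)[of 1] H by auto
    obtain f2 where f2: "blinfun_apply f2 x = \<alpha>" "blinfun_apply f2 y = -1" "norm f2 \<le> 1 + \<epsilon>"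
      using y(2)[of "-1"] H by auto
    show "\<exists>(y::'a) (f1::'a \<Rightarrow>\<^sub>L real) (f2::'a \<Rightarrow>\<^sub>L real). norm y = 1 \<and>
              blinfun_apply f1 x = \<alpha> \<and> blinfun_apply f2 x = \<alpha> \<and> blinfun_apply f1 y - blinfun_apply f2 y > 2 - \<epsilon> \<and>
              norm f1 \<le> 1 + \<epsilon> \<and> norm f2 \<le> 1 + \<epsilon>"
      using y(1) f1 f2 H by (intro exI[of _ y] exI[of _ f1] exI[of _ f2]) auto
  qed
  have BC: "?B \<Longrightarrow> ?C"
  proof (intro allI impI)
    fix x :: 'a and \<epsilon> :: real assume B: ?B and H: "norm x = 1 \<and> \<epsilon> > 0"
    then show "\<exists>(y::'a) (f1::'a \<Rightarrow>\<^sub>L real) (f2::'a \<Rightarrow>\<^sub>L real). norm y = 1 \<and>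
              blinfun_apply f1 x = 1 \<and> blinfun_apply f2 x = 1 \<and> blinfun_apply f1 y - blinfun_apply f2 y > 2 - \<epsilon> \<and>
              norm f1 \<le> 1 + \<epsilon> \<and> norm f2 \<le> 1 + \<epsilon>"
      using B[rule_format, of x 1 \<epsilon>] by auto
  qed
  have CL: "?C \<Longrightarrow> ?LO"
  proof (rule LO_intro[OF nontriv])
    fix u :: 'a and \<epsilon> :: real assume C: ?C and u: "norm u = 1" and e: "0 < \<epsilon>" "\<epsilon> < 1"
    obtain y :: 'a and f1 f2 :: "'a \<Rightarrow>\<^sub>L real" where yf: "norm y = 1"
      "blinfun_apply f1 u = 1" "blinfun_apply f2 u = 1" "blinfun_apply f1 y - blinfun_apply f2 y > 2 - \<epsilon>/4"
      "norm f1 \<le> 1 + \<epsilon>/4" "norm f2 \<le> 1 + \<epsilon>/4"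
      using C[rule_format, of u "\<epsilon>/4"] u e by auto
    show "\<exists>y::'a. norm y = 1 \<and> (\<forall>r. (1-\<epsilon>)*(\<bar>r\<bar>+1) \<le> norm (r *\<^sub>R u + y))"
      using C_core[OF yf e] yf(1) by blast
  qed
  have DL: "?D \<Longrightarrow> ?LO" using L5[OF nontriv] by blast
  have LD: "?LO \<Longrightarrow> ?D" using L6 by blast
  show ?thesis using LA AB BC CL DL LD by blast
qed


end
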